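(* Let $\alpha,\nu>0$ and let $u$ be a sufficiently smooth solution of the second grade fluid equations with Dirichlet boundary condition on $\Omega$. Set $v=u-\alpha\Delta u$ and $\gamma_i(t)=\int_{\Gamma_i}v(t)\cdot n^\perp$. Then for every $i\in\{1,\dots,N\}$ and $t\ge0$, $\gamma_i(t)=\gamma_i(0)e^{-\frac\nu\alpha t}$.
   Context: $\Omega\subset\mathbb R^2$ is a smooth bounded domain with $\partial\Omega=\Gamma\cup\Gamma_1\cup\dots\cup\Gamma_N$ ($\Gamma$ the outer boundary component, $\Gamma_1,\dots,\Gamma_N$ the inner components, smooth closed curves); $n$ outward unit normal, $n^\perp$ unit tangent. The second grade fluid equations with Dirichlet boundary condition are $\partial_t(u-\alpha\Delta u)-\nu\Delta u+u\cdot\nabla(u-\alpha\Delta u)+\sum_j(u-\alpha\Delta u)_j\nabla u_j=-\nabla\pi$, $\operatorname{div}u=0$ in $\Omega$, $u|_{\partial\Omega}=0$. *)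

theory Defs
  imports "HOL-Analysis.Analysis"
begin

text \<open>C-infinity functions on a Euclidean space: differentiable everywhere, and every
  partial derivative (along a basis vector) is again C-infinity (coinductively, i.e. to
  all orders).\<close>
coinductive smooth_fun :: "('a::euclidean_space \<Rightarrow> real) \<Rightarrow> bool" where
  "\<lbrakk> \<forall>x. f differentiable (at x);
     \<forall>b\<in>Basis. smooth_fun (\<lambda>x. frechet_derivative f (at x) b) \<rbrakk> \<Longrightarrow> smooth_fun f"

definition smooth_closed_curve :: "(real \<Rightarrow> real^2) \<Rightarrow> bool" where
  "smooth_closed_curve g \<longleftrightarrow>
     (\<forall>k. smooth_fun (\<lambda>s. g s $ k)) \<and>
     (\<forall>s. g (s + 1) = g s) \<and>
     (\<forall>s. vector_derivative g (at s) \<noteq> 0) \<and>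
     inj_on g {0..<1}"

definition pt :: "(real \<Rightarrow> real^2 \<Rightarrow> real) \<Rightarrow> real \<Rightarrow> real^2 \<Rightarrow> real" where
  "pt F t x = deriv (\<lambda>s. F s x) t"

definition px :: "2 \<Rightarrow> (real \<Rightarrow> real^2 \<Rightarrow> real) \<Rightarrow> real \<Rightarrow> real^2 \<Rightarrow> real" where
  "px j F t x = deriv (\<lambda>h. F t (x + h *\<^sub>R axis j 1)) 0"

definition lap :: "(real \<Rightarrow> real^2 \<Rightarrow> real) \<Rightarrow> real \<Rightarrow> real^2 \<Rightarrow> real" where
  "lap F t x = (\<Sum>j\<in>UNIV. px j (px j F) t x)"

definition comp :: "(real \<Rightarrow> real^2 \<Rightarrow> real^2) \<Rightarrow> 2 \<Rightarrow> real \<Rightarrow> real^2 \<Rightarrow> real" where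
  "comp u i = (\<lambda>t x. u t x $ i)"

definition sg_v :: "real \<Rightarrow> (real \<Rightarrow> real^2 \<Rightarrow> real^2) \<Rightarrow> real \<Rightarrow> real^2 \<Rightarrow> real^2" where
  "sg_v \<alpha> u t x = (\<chi> i. u t x $ i - \<alpha> * lap (comp u i) t x)"

definition second_grade_solution ::
  "real \<Rightarrow> real \<Rightarrow> (real^2) set \<Rightarrow> (real \<Rightarrow> real^2 \<Rightarrow> real^2) \<Rightarrow> (real \<Rightarrow> real^2 \<Rightarrow> real) \<Rightarrow> bool" where
  "second_grade_solution \<alpha> \<nu> \<Omega> u p \<longleftrightarrow>
     (\<forall>i. smooth_fun (\<lambda>(t, x). u t x $ i)) \<and> smooth_fun (\<lambda>(t, x). p t x) \<and>
     (\<forall>t>0. \<forall>x\<in>\<Omega>. \<forall>i.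
        pt (comp (sg_v \<alpha> u) i) t x - \<nu> * lap (comp u i) t x
        + (\<Sum>j\<in>UNIV. u t x $ j * px j (comp (sg_v \<alpha> u) i) t x)
        + (\<Sum>j\<in>UNIV. sg_v \<alpha> u t x $ j * px i (comp u j) t x)
        = - px i p t x) \<and>
     (\<forall>t>0. \<forall>x\<in>\<Omega>. (\<Sum>j\<in>UNIV. px j (comp u j) t x) = 0) \<and>
     (\<forall>t\<ge>0. \<forall>x\<in>frontier \<Omega>. u t x = 0)"

text \<open>Circulation of v(t) along a boundary curve: integral of v . n-perp with respect to
  arc length, computed via the parametrisation g (orientation given by g).\<close>
definition circulation :: "real \<Rightarrow> (real \<Rightarrow> real^2 \<Rightarrow> real^2) \<Rightarrow> (real \<Rightarrow> real^2) \<Rightarrow> real \<Rightarrow> real" where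
  "circulation \<alpha> u g t = integral {0..1} (\<lambda>s. sg_v \<alpha> u t (g s) \<bullet> vector_derivative g (at s))"

end

theory Submission
  imports Defs
begin

lemma smooth_diff: "smooth_fun f \<Longrightarrow> f differentiable (at x)"
  by (erule smooth_fun.cases) auto

lemma smooth_D: "smooth_fun f \<Longrightarrow> b \<in> Basis \<Longrightarrow> smooth_fun (\<lambda>x. frechet_derivative f (at x) b)"
  by (erule smooth_fun.cases) auto

lemma smooth_isCont: "smooth_fun f \<Longrightarrow> isCont f x"
  by (simp add: differentiable_imp_continuous_within smooth_diff)

lemma smooth_cont_comp[continuous_intros]:
  "smooth_fun f \<Longrightarrow> continuous_on S g \<Longrightarrow> continuous_on S (\<lambda>x. f (g x))"
  by (rule continuous_on_compose2[of UNIV f]) (auto intro: continuous_at_imp_continuous_on smooth_isCont)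

lemma smooth_lin:
  fixes f g :: "'a::euclidean_space \<Rightarrow> real"
  assumes "smooth_fun f" "smooth_fun g"
  shows "smooth_fun (\<lambda>x. c * f x + d * g x)"
proof -
  define X where "X = (\<lambda>h::'a\<Rightarrow>real. \<exists>f g c d. smooth_fun f \<and> smooth_fun g \<and> h = (\<lambda>x. c * f x + d * g x))"
  have "X (\<lambda>x. c * f x + d * g x)" using assms unfolding X_def by blast
  then show ?thesis
  proof (rule smooth_fun.coinduct[of X])
    fix h assume "X h"
    then obtain f g c d where fg: "smooth_fun f" "smooth_fun g" "h = (\<lambda>x. c * f x + d * g x)"
      unfolding X_def by blast
    have hd: "(h has_derivative (\<lambda>v. c * frechet_derivative f (at x) v + d * frechet_derivative g (at x) v)) (at x)" for x
      unfolding fg(3)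
      by (intro derivative_intros) (use fg smooth_diff frechet_derivative_works in blast)+
    have fd: "frechet_derivative h (at x) = (\<lambda>v. c * frechet_derivative f (at x) v + d * frechet_derivative g (at x) v)" for x
      using hd frechet_derivative_at by metis
    have hdiff: "h differentiable (at x)" for x using hd by (auto simp: differentiable_def)
    have "(\<forall>x. h differentiable at x) \<and> (\<forall>b\<in>Basis. X (\<lambda>x. frechet_derivative h (at x) b) \<or> smooth_fun (\<lambda>x. frechet_derivative h (at x) b))" 
    proof (intro conjI)
      show "\<forall>x. h differentiable at x" using hdiff by blast
      show "\<forall>b\<in>Basis. X (\<lambda>x. frechet_derivative h (at x) b) \<or> smooth_fun (\<lambda>x. frechet_derivative h (at x) b)"
      proof
        fix b :: 'a assume b: "b \<in> Basis"
        have "X (\<lambda>x. frechet_derivative h (at x) b)"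
          unfolding X_def fd
          using smooth_D[OF fg(1) b] smooth_D[OF fg(2) b] by blast
        then show "X (\<lambda>x. frechet_derivative h (at x) b) \<or> smooth_fun (\<lambda>x. frechet_derivative h (at x) b)" ..
      qed
    qed
    then show "\<exists>f. h = f \<and> (\<forall>x. f differentiable at x) \<and> (\<forall>b\<in>Basis. X (\<lambda>x. frechet_derivative f (at x) b) \<or> smooth_fun (\<lambda>x. frechet_derivative f (at x) b))" by blast
  qed
qed

lemma chain_fd:
  assumes "(c has_derivative (\<lambda>h. h *\<^sub>R w)) (at h0)" "f differentiable at (c h0)"
  shows "((\<lambda>h. f (c h)) has_field_derivative frechet_derivative f (at (c h0)) w) (at h0)"
proof -
  have l: "linear (frechet_derivative f (at (c h0)))" by (rule linear_frechet_derivative) fact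
  have "((\<lambda>h. f (c h)) has_derivative (\<lambda>h. frechet_derivative f (at (c h0)) (h *\<^sub>R w))) (at h0)"
    by (rule has_derivative_compose[OF assms(1)]) (use assms(2) frechet_derivative_works in blast)
  then show ?thesis unfolding has_field_derivative_def
    by (rule has_derivative_eq_rhs) (auto simp: linear_cmul[OF l] fun_eq_iff)
qed

lemma line_hd: "((\<lambda>h. (t::real, x + h *\<^sub>R a)) has_derivative (\<lambda>h. h *\<^sub>R (0::real, a::real^2))) (at h0)"
proof -
  have "((\<lambda>h. (t, x) + h *\<^sub>R (0::real, a)) has_derivative (\<lambda>h. h *\<^sub>R (0::real, a::real^2))) (at h0)"
    by (auto intro!: derivative_eq_intros)
  then show ?thesis by simp
qed

lemma time_hd: "((\<lambda>h. (h::real, x::real^2)) has_derivative (\<lambda>h. h *\<^sub>R (1::real, 0::real^2))) (at h0)"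
proof -
  have "((\<lambda>h. (0, x) + h *\<^sub>R (1::real, 0::real^2)) has_derivative (\<lambda>h. h *\<^sub>R (1::real, 0::real^2))) (at h0)"
    by (auto intro!: derivative_eq_intros)
  then show ?thesis by simp
qed

lemma px_eq:
  assumes "smooth_fun f"
  shows "px j (\<lambda>t x. f (t,x)) = (\<lambda>t x. frechet_derivative f (at (t,x)) (0, axis j 1))"
proof (intro ext)
  fix t x
  have "((\<lambda>h. f (t, x + h *\<^sub>R axis j 1)) has_field_derivative frechet_derivative f (at (t, x + 0 *\<^sub>R axis j 1)) (0, axis j 1)) (at 0)"
    by (rule chain_fd[OF line_hd smooth_diff[OF assms]])
  then show "px j (\<lambda>t x. f (t,x)) t x = frechet_derivative f (at (t,x)) (0, axis j 1)"
    unfolding px_def by (simp add: DERIV_imp_deriv)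
qed

lemma pt_eq:
  assumes "smooth_fun f"
  shows "pt (\<lambda>t x. f (t,x)) = (\<lambda>t x. frechet_derivative f (at (t,x)) (1, 0))"
proof (intro ext)
  fix t x
  have "((\<lambda>h. f (h, x)) has_field_derivative frechet_derivative f (at (t, x)) (1, 0)) (at t)"
    by (rule chain_fd[OF time_hd smooth_diff[OF assms]])
  then show "pt (\<lambda>t x. f (t,x)) t x = frechet_derivative f (at (t,x)) (1, 0)"
    unfolding pt_def by (simp add: DERIV_imp_deriv)
qed

lemma e0_Basis: "((1::real), (0::real^2)) \<in> Basis"
  by (auto simp: Basis_prod_def)

lemma ej_Basis: "((0::real), axis j (1::real) :: real^2) \<in> (Basis :: (real \<times> (real^2)) set)"
  by (auto simp: Basis_prod_def Basis_vec_def)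

lemma periodic_int:
  assumes "\<forall>s. c (s + 1) = (c s :: 'a)"
  shows "c (x + of_int k) = c x"
proof -
  have nat: "c (y + of_nat n) = c y" for y n
  proof (induction n)
    case (Suc n)
    have "c (y + of_nat (Suc n)) = c ((y + of_nat n) + 1)" by (simp add: algebra_simps)
    also have "\<dots> = c (y + of_nat n)" using assms by blast
    finally show ?case using Suc by simp
  qed simp
  show ?thesis
  proof (cases "k \<ge> 0")
    case True
    then show ?thesis using nat[of x "nat k"] by simp
  next
    case False
    then have "c (x + of_int k + of_nat (nat (-k))) = c (x + of_int k)" by (rule_tac nat)
    then show ?thesis using False by simp
  qed
qed

lemma curve_facts:
  assumes "smooth_closed_curve c"
  defines "g' \<equiv> \<lambda>s. \<chi> m. frechet_derivative (\<lambda>s. c s $ m) (at s) 1"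
  shows "\<And>s. (c has_vector_derivative g' s) (at s)" "continuous_on UNIV g'" "continuous_on UNIV c"
    "\<And>s. c s \<in> path_image c" "c 1 = c 0"
proof -
  have sm: "smooth_fun (\<lambda>s. c s $ m)" for m using assms(1) unfolding smooth_closed_curve_def by blast
  have per: "\<forall>s. c (s + 1) = c s" using assms(1) unfolding smooth_closed_curve_def by blast
  show "c 1 = c 0" using per[rule_format, of 0] by simp
  show "continuous_on UNIV g'" unfolding g'_def
    by (intro continuous_on_vec_lambda continuous_at_imp_continuous_on ballI smooth_isCont smooth_D[OF sm]) auto
  have "continuous_on UNIV (\<lambda>s. \<chi> m. c s $ m)"
    by (intro continuous_on_vec_lambda continuous_at_imp_continuous_on ballI smooth_isCont sm)
  then show "continuous_on UNIV c" by simp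
  fix s
  have cm: "((\<lambda>s. c s $ m) has_derivative (\<lambda>h. h * g' s $ m)) (at s)" for m
  proof -
    have "((\<lambda>s. c s $ m) has_derivative frechet_derivative (\<lambda>s. c s $ m) (at s)) (at s)"
      using smooth_diff[OF sm] frechet_derivative_works by blast
    moreover have "frechet_derivative (\<lambda>s. c s $ m) (at s) = (\<lambda>h. h * g' s $ m)"
    proof
      fix h :: real
      have l: "linear (frechet_derivative (\<lambda>s. c s $ m) (at s))"
        using linear_frechet_derivative smooth_diff[OF sm] by blast
      have "frechet_derivative (\<lambda>s. c s $ m) (at s) (h *\<^sub>R 1) = h * frechet_derivative (\<lambda>s. c s $ m) (at s) 1"
        using linear_cmul[OF l, of h 1] by simp
      then show "frechet_derivative (\<lambda>s. c s $ m) (at s) h = h * g' s $ m" by (simp add: g'_def)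
    qed
    ultimately show ?thesis by simp
  qed
  show "(c has_vector_derivative g' s) (at s)"
    unfolding has_vector_derivative_def
    by (subst has_derivative_componentwise_within) (auto simp: Basis_vec_def inner_axis cm)
  have "c s = c (frac s + of_int (floor s))" by (simp add: frac_def)
  also have "\<dots> = c (frac s)" by (rule periodic_int[OF per])
  finally show "c s \<in> path_image c"
    unfolding path_image_def using frac_lt_1[of s] by (auto intro!: imageI)
qed

lemma leib:
  fixes W :: "2 \<Rightarrow> real \<times> (real^2) \<Rightarrow> real" and c g' :: "real \<Rightarrow> real^2"
  assumes sW: "\<And>m. smooth_fun (W m)" and cc: "continuous_on UNIV c" and cg: "continuous_on UNIV g'"
  shows "((\<lambda>t. integral {0..1} (\<lambda>s. \<Sum>m\<in>UNIV. W m (t, c s) * g' s $ m)) has_field_derivative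
          integral {0..1} (\<lambda>s. \<Sum>m\<in>UNIV. frechet_derivative (W m) (at (t, c s)) (1,0) * g' s $ m)) (at t)"
proof -
  have cc': "continuous_on S h \<Longrightarrow> continuous_on S (\<lambda>x. c (h x))" for S and h :: "'z::topological_space \<Rightarrow> real"
    by (rule continuous_on_compose2[OF cc]) auto
  have cg': "continuous_on S h \<Longrightarrow> continuous_on S (\<lambda>x. g' (h x))" for S and h :: "'z::topological_space \<Rightarrow> real"
    by (rule continuous_on_compose2[OF cg]) auto
  have sD: "smooth_fun (\<lambda>z. frechet_derivative (W m) (at z) (1,0))" for m
    by (rule smooth_D[OF sW e0_Basis])
  have "((\<lambda>t. integral (cbox 0 1) (\<lambda>s. \<Sum>m\<in>UNIV. W m (t, c s) * g' s $ m)) has_field_derivative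
          integral (cbox 0 1) (\<lambda>s. \<Sum>m\<in>UNIV. frechet_derivative (W m) (at (t, c s)) (1,0) * g' s $ m)) (at t within UNIV)"
  proof (rule leibniz_rule_field_derivative)
    fix x :: real and s :: real
    show "((\<lambda>x. \<Sum>m\<in>UNIV. W m (x, c s) * g' s $ m) has_field_derivative (\<Sum>m\<in>UNIV. frechet_derivative (W m) (at (x, c s)) (1,0) * g' s $ m)) (at x within UNIV)"
      by (intro DERIV_sum DERIV_cmult_right) (rule chain_fd[OF time_hd smooth_diff[OF sW]])
  next
    fix x :: real
    show "(\<lambda>s. \<Sum>m\<in>UNIV. W m (x, c s) * g' s $ m) integrable_on cbox 0 1"
    proof -
      have "continuous_on {0..1} (\<lambda>s. W m (x, c s) * g' s $ m)" for m
      proof (rule continuous_on_mult)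
        show "continuous_on {0..1} (\<lambda>s. W m (x, c s))"
          by (rule smooth_cont_comp[OF sW]) (intro continuous_on_Pair continuous_on_const cc' continuous_on_id)
        show "continuous_on {0..1} (\<lambda>s. g' s $ m)"
          by (rule continuous_on_component) (rule cg' continuous_on_id)+
      qed
      then show ?thesis unfolding cbox_interval
        by (intro integrable_continuous_interval continuous_on_sum) auto
    qed
  next
    show "continuous_on (UNIV \<times> cbox 0 1) (\<lambda>(x, s). \<Sum>m\<in>UNIV. frechet_derivative (W m) (at (x, c s)) (1,0) * g' s $ m)"
    proof -
      have "continuous_on (UNIV \<times> cbox 0 1) (\<lambda>z. frechet_derivative (W m) (at (fst z, c (snd z))) (1,0) * g' (snd z) $ m)" for m
      proof (rule continuous_on_mult)
        show "continuous_on (UNIV \<times> cbox 0 1) (\<lambda>z. frechet_derivative (W m) (at (fst z, c (snd z))) (1,0))"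
          by (rule smooth_cont_comp[OF sD]) (intro continuous_on_Pair continuous_on_fst continuous_on_snd cc' continuous_on_id)
        show "continuous_on (UNIV \<times> cbox 0 1) (\<lambda>z. g' (snd z) $ m)"
          by (rule continuous_on_component) (intro cg' continuous_on_snd continuous_on_id)
      qed
      then show ?thesis unfolding split_beta
        by (intro continuous_on_sum) auto
    qed
  qed auto
  then show ?thesis by (simp add: cbox_interval)
qed

lemma lin_exp:
  fixes F :: "real \<times> (real^2) \<Rightarrow> real"
  assumes "F differentiable at z"
  shows "(\<Sum>m\<in>UNIV. frechet_derivative F (at z) (0, axis m 1) * v $ m) = frechet_derivative F (at z) (0, v)"
proof -
  have l: "linear (frechet_derivative F (at z))" using assms by (rule linear_frechet_derivative)
  have eq: "((0::real), v) = v $ 1 *\<^sub>R (0, axis 1 1) + v $ 2 *\<^sub>R (0, axis 2 1)"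
    by (auto simp: vec_eq_iff axis_def forall_2)
  have "frechet_derivative F (at z) (0, v) = frechet_derivative F (at z) (v $ 1 *\<^sub>R (0, axis 1 1) + v $ 2 *\<^sub>R (0, axis 2 1))"
    using eq by (rule arg_cong)
  also have "\<dots> = v $ 1 * frechet_derivative F (at z) (0, axis 1 1) + v $ 2 * frechet_derivative F (at z) (0, axis 2 1)"
    by (simp only: linear_add[OF l] linear_cmul[OF l] real_scaleR_def)
  finally have "frechet_derivative F (at z) (0, v) = v $ 1 * frechet_derivative F (at z) (0, axis 1 1) + v $ 2 * frechet_derivative F (at z) (0, axis 2 1)" .
  then show ?thesis by (simp add: sum_2 mult.commute)
qed

lemma curve_chain:
  fixes F :: "real \<times> (real^2) \<Rightarrow> real"
  assumes "F differentiable at (t, c s)" "(c has_vector_derivative w) (at s)"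
  shows "((\<lambda>h. F (t, c h)) has_field_derivative frechet_derivative F (at (t, c s)) (0, w)) (at s)"
proof -
  have "((\<lambda>h. (t, c h)) has_derivative (\<lambda>h. (0, h *\<^sub>R w))) (at s)"
    using has_derivative_Pair[OF has_derivative_const[of t] assms(2)[unfolded has_vector_derivative_def]] by simp
  then have "((\<lambda>h. (t, c h)) has_derivative (\<lambda>h. h *\<^sub>R (0, w))) (at s)" by simp
  from chain_fd[OF this] assms(1) show ?thesis by simp
qed

lemma smooth_cont: "smooth_fun f \<Longrightarrow> continuous_on S f"
  by (intro continuous_at_imp_continuous_on ballI smooth_isCont)

theorem lemma6p4:
  fixes \<alpha> \<nu> :: real and \<Omega> :: "(real^2) set" and N :: nat
    and g :: "nat \<Rightarrow> real \<Rightarrow> real^2"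
    and u :: "real \<Rightarrow> real^2 \<Rightarrow> real^2" and p :: "real \<Rightarrow> real^2 \<Rightarrow> real"
  assumes "\<alpha> > 0" and "\<nu> > 0"
    and "open \<Omega>" and "connected \<Omega>" and "bounded \<Omega>"
    and "\<forall>i\<in>{0..N}. smooth_closed_curve (g i)"
    and "\<forall>i\<in>{0..N}. \<forall>j\<in>{0..N}. i \<noteq> j \<longrightarrow> path_image (g i) \<inter> path_image (g j) = {}"
    and "\<forall>i\<in>{1..N}. path_image (g i) \<subseteq> inside (path_image (g 0))"
    and "frontier \<Omega> = path_image (g 0) \<union> (\<Union>i\<in>{1..N}. path_image (g i))"
    and "second_grade_solution \<alpha> \<nu> \<Omega> u p"
  shows "\<forall>i\<in>{1..N}. \<forall>t\<ge>0.
           circulation \<alpha> u (g i) t = circulation \<alpha> u (g i) 0 * exp (- (\<nu> / \<alpha>) * t)"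
proof -
  note sol = assms(10)[unfolded second_grade_solution_def]
  define U where "U i = (\<lambda>(t,x). u t x $ i)" for i
  define P where "P = (\<lambda>(t,x). p t x)"
  have sU: "smooth_fun (U i)" for i using sol U_def by auto
  have sP: "smooth_fun P" using sol P_def by auto
  have compu: "comp u i = (\<lambda>t x. U i (t,x))" for i by (simp add: comp_def U_def)
  define G where "G i j = (\<lambda>z. frechet_derivative (U i) (at z) (0, axis j 1))" for i j
  have sG: "smooth_fun (G i j)" for i j unfolding G_def by (rule smooth_D[OF sU ej_Basis])
  have pxu: "px j (comp u i) = (\<lambda>t x. G i j (t,x))" for i j
    unfolding compu G_def by (rule px_eq[OF sU])
  define L where "L i = (\<lambda>z. 1 * frechet_derivative (G i 1) (at z) (0, axis 1 1) + 1 * frechet_derivative (G i 2) (at z) (0, axis 2 1))" for i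
  have sL: "smooth_fun (L i)" for i unfolding L_def
    by (intro smooth_lin smooth_D[OF sG ej_Basis])
  have lapu: "lap (comp u i) = (\<lambda>t x. L i (t,x))" for i
    by (intro ext) (simp add: lap_def pxu px_eq[OF sG] sum_2 L_def)
  define W where "W i = (\<lambda>z. 1 * U i z + (-\<alpha>) * L i z)" for i
  have sW: "smooth_fun (W i)" for i unfolding W_def by (intro smooth_lin sU sL)
  have vW: "sg_v \<alpha> u t x $ i = W i (t,x)" for t x i by (simp add: sg_v_def W_def lapu U_def)
  have compv: "comp (sg_v \<alpha> u) i = (\<lambda>t x. W i (t,x))" for i by (simp add: comp_def vW)
  have ptv: "pt (comp (sg_v \<alpha> u) i) t x = frechet_derivative (W i) (at (t,x)) (1,0)" for i t x
    by (simp add: compv pt_eq[OF sW])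
  have pxv: "px j (comp (sg_v \<alpha> u) i) t x = frechet_derivative (W i) (at (t,x)) (0, axis j 1)" for i j t x
    by (simp add: compv px_eq[OF sW])
  have pxu': "px j (comp u i) t x = frechet_derivative (U i) (at (t,x)) (0, axis j 1)" for i j t x
    by (simp add: pxu G_def)
  have pP: "p = (\<lambda>t x. P (t,x))" by (simp add: P_def)
  have pxp: "px j p t x = frechet_derivative P (at (t,x)) (0, axis j 1)" for j t x
    by (simp add: pP px_eq[OF sP])
  have uU: "u t x $ j = U j (t,x)" for t x j by (simp add: U_def)
  define E where "E i z = frechet_derivative (W i) (at z) (1,0) - \<nu> * L i z
      + (\<Sum>j\<in>UNIV. U j z * frechet_derivative (W i) (at z) (0, axis j 1))
      + (\<Sum>j\<in>UNIV. W j z * frechet_derivative (U j) (at z) (0, axis i 1))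
      + frechet_derivative P (at z) (0, axis i 1)" for i z
  have Eint: "E i (t,x) = 0" if "t > 0" "x \<in> \<Omega>" for i t x
  proof -
    have "pt (comp (sg_v \<alpha> u) i) t x - \<nu> * lap (comp u i) t x
        + (\<Sum>j\<in>UNIV. u t x $ j * px j (comp (sg_v \<alpha> u) i) t x)
        + (\<Sum>j\<in>UNIV. sg_v \<alpha> u t x $ j * px i (comp u j) t x)
        = - px i p t x" using sol that by blast
    then show ?thesis unfolding E_def ptv pxv pxu' pxp vW uU lapu by simp
  qed
  have cE: "continuous_on UNIV (E i)" for i
    unfolding E_def
    by (intro continuous_on_add continuous_on_diff continuous_on_mult continuous_on_sum continuous_on_const
        smooth_cont smooth_D[OF sW e0_Basis] smooth_D[OF sW ej_Basis] smooth_D[OF sU ej_Basis]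
        smooth_D[OF sP ej_Basis] sL sU sW)
  have Ebd: "E i (s,y) = 0" if "s > 0" "y \<in> frontier \<Omega>" for i s y
  proof -
    have cl: "closed {z. E i z = 0}" by (rule closed_Collect_eq[OF cE continuous_on_const])
    have "{0<..} \<times> \<Omega> \<subseteq> {z. E i z = 0}" using Eint by auto
    then have "closure ({0<..} \<times> \<Omega>) \<subseteq> {z. E i z = 0}" using cl by (rule closure_minimal)
    moreover have "(s,y) \<in> closure ({0<..} \<times> \<Omega>)"
      unfolding closure_Times using that by (auto simp: frontier_def)
    ultimately show ?thesis by auto
  qed
  have bd: "frechet_derivative (W i) (at (s,y)) (1,0) = -(\<nu>/\<alpha>) * W i (s,y)
      - (\<Sum>j\<in>UNIV. W j (s,y) * frechet_derivative (U j) (at (s,y)) (0, axis i 1))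
      - frechet_derivative P (at (s,y)) (0, axis i 1)" if "s > 0" "y \<in> frontier \<Omega>" for i s y
  proof -
    have U0: "U j (s,y) = 0" for j using sol that unfolding U_def by auto
    have WL: "W i (s,y) = -\<alpha> * L i (s,y)" by (simp add: W_def U0)
    have "E i (s,y) = 0" using Ebd that by blast
    then have "frechet_derivative (W i) (at (s,y)) (1,0) = \<nu> * L i (s,y)
      - (\<Sum>j\<in>UNIV. W j (s,y) * frechet_derivative (U j) (at (s,y)) (0, axis i 1))
      - frechet_derivative P (at (s,y)) (0, axis i 1)" unfolding E_def by (simp add: U0)
    moreover have "\<nu> * L i (s,y) = -(\<nu>/\<alpha>) * W i (s,y)" using WL assms(1) by (simp add: field_simps)
    ultimately show ?thesis by simp
  qed
  show ?thesis
  proof (intro ballI allI impI)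
    fix k and t :: real assume k: "k \<in> {1..N}" and t: "0 \<le> t"
    define c where "c = g k"
    have sc: "smooth_closed_curve c" using assms(6) k unfolding c_def by auto
    define g' where "g' = (\<lambda>s. \<chi> m. frechet_derivative (\<lambda>s. c s $ m) (at s) 1)"
    have g'e: "(\<chi> m. frechet_derivative (\<lambda>s. c s $ m) (at s) 1) = g' s" for s by (simp add: g'_def)
    note cf = curve_facts[OF sc, unfolded g'e]
    have cfront: "c s \<in> frontier \<Omega>" for s
      using cf(4)[of s] k assms(9) unfolding c_def by auto
    have vd: "vector_derivative c (at s) = g' s" for s by (rule vector_derivative_at[OF cf(1)])
    define \<gamma> where "\<gamma> = (\<lambda>t'. integral {0..1} (\<lambda>s. \<Sum>m\<in>UNIV. W m (t', c s) * g' s $ m))"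
    define \<gamma>' where "\<gamma>' = (\<lambda>t'. integral {0..1} (\<lambda>s. \<Sum>m\<in>UNIV. frechet_derivative (W m) (at (t', c s)) (1,0) * g' s $ m))"
    have circ: "circulation \<alpha> u c t' = \<gamma> t'" for t'
      unfolding circulation_def \<gamma>_def vd by (simp add: inner_vec_def vW)
    have dg: "(\<gamma> has_field_derivative \<gamma>' t') (at t')" for t'
      unfolding \<gamma>_def \<gamma>'_def by (rule leib[OF sW cf(3) cf(2)])
    have ode: "\<gamma>' t' = -(\<nu>/\<alpha>) * \<gamma> t'" if t': "t' > 0" for t'
    proof -
      define f where "f = (\<lambda>s. \<Sum>m\<in>UNIV. W m (t', c s) * g' s $ m)"
      define Q where "Q = (\<lambda>s. frechet_derivative P (at (t', c s)) (0, g' s))"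
      have zeroU: "frechet_derivative (U j) (at (t', c s)) (0, g' s) = 0" for j s
      proof -
        have d1: "((\<lambda>h. U j (t', c h)) has_field_derivative frechet_derivative (U j) (at (t', c s)) (0, g' s)) (at s)"
          by (rule curve_chain[OF smooth_diff[OF sU] cf(1)])
        have "(\<lambda>h. U j (t', c h)) = (\<lambda>h. 0)"
          using sol t' cfront unfolding U_def by auto
        with d1 have "((\<lambda>h. 0::real) has_field_derivative frechet_derivative (U j) (at (t', c s)) (0, g' s)) (at s)"
          by simp
        then show ?thesis using DERIV_const DERIV_unique by blast
      qed
      have pt_id: "(\<Sum>m\<in>UNIV. frechet_derivative (W m) (at (t', c s)) (1,0) * g' s $ m) = -(\<nu>/\<alpha>) * f s - Q s" for s
      proof -
        have "(\<Sum>m\<in>UNIV. frechet_derivative (W m) (at (t', c s)) (1,0) * g' s $ m)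
          = (\<Sum>m\<in>UNIV. (-(\<nu>/\<alpha>) * W m (t', c s)
             - (\<Sum>j\<in>UNIV. W j (t', c s) * frechet_derivative (U j) (at (t', c s)) (0, axis m 1))
             - frechet_derivative P (at (t', c s)) (0, axis m 1)) * g' s $ m)"
          using bd[OF t' cfront] by simp
        also have "\<dots> = -(\<nu>/\<alpha>) * (\<Sum>m\<in>UNIV. W m (t', c s) * g' s $ m)
             - (\<Sum>j\<in>UNIV. W j (t', c s) * (\<Sum>m\<in>UNIV. frechet_derivative (U j) (at (t', c s)) (0, axis m 1) * g' s $ m))
             - (\<Sum>m\<in>UNIV. frechet_derivative P (at (t', c s)) (0, axis m 1) * g' s $ m)"
          by (simp add: sum_2 algebra_simps)
        also have "\<dots> = -(\<nu>/\<alpha>) * f s - Q s"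
          unfolding lin_exp[OF smooth_diff[OF sU]] lin_exp[OF smooth_diff[OF sP]] zeroU f_def Q_def by simp
        finally show ?thesis .
      qed
      have hQ: "(Q has_integral 0) {0..1}"
      proof -
        have "(Q has_integral (P (t', c 1) - P (t', c 0))) {0..1}"
        proof (rule fundamental_theorem_of_calculus)
          fix s :: real assume "s \<in> {0..1}"
          have "((\<lambda>h. P (t', c h)) has_field_derivative Q s) (at s)"
            unfolding Q_def by (rule curve_chain[OF smooth_diff[OF sP] cf(1)])
          then show "((\<lambda>h. P (t', c h)) has_vector_derivative Q s) (at s within {0..1})"
            by (simp add: has_real_derivative_iff_has_vector_derivative has_vector_derivative_at_within)
        qed simp
        then show ?thesis using cf(5) by simp
      qed
      have cf_: "continuous_on {0..1} f"
      proof -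
        have cc': "continuous_on S h \<Longrightarrow> continuous_on S (\<lambda>x. c (h x))" for S and h :: "real \<Rightarrow> real"
          by (rule continuous_on_compose2[OF cf(3)]) auto
        have "continuous_on {0..1} (\<lambda>s. W m (t', c s) * g' s $ m)" for m
        proof (rule continuous_on_mult)
          show "continuous_on {0..1} (\<lambda>s. W m (t', c s))"
            by (rule smooth_cont_comp[OF sW]) (intro continuous_on_Pair continuous_on_const cc' continuous_on_id)
          show "continuous_on {0..1} (\<lambda>s. g' s $ m)"
            by (rule continuous_on_component) (rule continuous_on_subset[OF cf(2)], simp)
        qed
        then show ?thesis unfolding f_def by (intro continuous_on_sum) auto
      qed
      have hf: "(f has_integral \<gamma> t') {0..1}"
        unfolding \<gamma>_def f_def[symmetric]
        by (rule integrable_integral[OF integrable_continuous_interval[OF cf_]])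
      have "((\<lambda>s. -(\<nu>/\<alpha>) * f s - Q s) has_integral (-(\<nu>/\<alpha>) * \<gamma> t' - 0)) {0..1}"
        by (intro has_integral_diff has_integral_mult_right hf hQ)
      then show ?thesis unfolding \<gamma>'_def pt_id by (simp add: integral_unique)
    qed
    define h where "h = (\<lambda>x. \<gamma> x * exp ((\<nu>/\<alpha>) * x))"
    have dh: "(h has_field_derivative (\<gamma>' x * exp ((\<nu>/\<alpha>) * x) + \<gamma> x * (exp ((\<nu>/\<alpha>) * x) * (\<nu>/\<alpha>)))) (at x)" for x
      unfolding h_def using assms(1) by (auto intro!: derivative_eq_intros dg)
    have "\<gamma> t * exp ((\<nu>/\<alpha>) * t) = \<gamma> 0"
    proof (cases "t = 0")
      case False
      then have "0 < t" using t by simp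
      have "h t = h 0"
      proof (rule DERIV_isconst_end[OF \<open>0 < t\<close>])
        show "continuous_on {0..t} h"
          using dh by (intro continuous_at_imp_continuous_on ballI DERIV_isCont) blast
        fix x :: real assume "0 < x" "x < t"
        then show "(h has_field_derivative 0) (at x)" using dh[of x] ode[of x] by (simp add: algebra_simps)
      qed
      then show ?thesis by (simp add: h_def)
    qed simp
    then have "\<gamma> t = \<gamma> 0 * exp (- (\<nu> / \<alpha>) * t)"
      by (metis (no_types, opaque_lifting) exp_minus_inverse mult.assoc mult.commute mult.right_neutral mult_minus_left)
    then show "circulation \<alpha> u (g k) t = circulation \<alpha> u (g k) 0 * exp (- (\<nu> / \<alpha>) * t)"
      using circ unfolding c_def by simp
  qed
qed

end
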